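(* For any nonempty valid set $T$, there exist a finite set $R_T$ and a number $n_T$ such that $\mathcal{S}_T(n)\subseteq R_T$ for all $n\ge n_T$.
   Context: For relatively prime positive integers $\alpha,\beta$ and positive integers $a_1,a_2$, the $(\alpha,\beta)$-walk $w^{\alpha,\beta}_k(a_1,a_2)$ is given by $w_1=a_1$, $w_2=a_2$, $w_{k+2}=\alpha w_{k+1}+\beta w_k$ ($k\ge1$). For a positive integer $n$, $s^{\alpha,\beta}(n;a_1,a_2)$ is the (largest) index $s$ with $w^{\alpha,\beta}_s(a_1,a_2)=n$ ($-\infty$ if none), and $s^{\alpha,\beta}(n)=\max_{a_1,a_2\ge1}s^{\alpha,\beta}(n;a_1,a_2)$. A set $T$ is valid if $T\subseteq\{(\alpha,\beta):\alpha,\beta\ge1,\gcd(\alpha,\beta)=1\}$. For valid $T$ define $\bar s_T(n)=\max_{(\alpha,\beta)\in T}s^{\alpha,\beta}(n)$ and $\mathcal{S}_T(n)=\{(\alpha,\beta)\in T:s^{\alpha,\beta}(n)=\bar s_T(n)\}$. *)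

theory Defs
  imports "HOL-Library.Extended_Real"
begin

fun walk0 :: "nat \<Rightarrow> nat \<Rightarrow> nat \<Rightarrow> nat \<Rightarrow> nat \<Rightarrow> nat" where
  "walk0 \<alpha> \<beta> a1 a2 0 = a1"
| "walk0 \<alpha> \<beta> a1 a2 (Suc 0) = a2"
| "walk0 \<alpha> \<beta> a1 a2 (Suc (Suc k)) =
     \<alpha> * walk0 \<alpha> \<beta> a1 a2 (Suc k) + \<beta> * walk0 \<alpha> \<beta> a1 a2 k"

text \<open>The (alpha,beta)-walk, 1-based: walk a b a1 a2 1 = a1, walk a b a1 a2 2 = a2
  (only indices k >= 1 are meaningful).\<close>
definition walk :: "nat \<Rightarrow> nat \<Rightarrow> nat \<Rightarrow> nat \<Rightarrow> nat \<Rightarrow> nat" where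
  "walk \<alpha> \<beta> a1 a2 k = walk0 \<alpha> \<beta> a1 a2 (k - 1)"

definition s_walk :: "nat \<Rightarrow> nat \<Rightarrow> nat \<Rightarrow> nat \<Rightarrow> nat \<Rightarrow> ereal" where
  "s_walk \<alpha> \<beta> n a1 a2 =
     (if \<exists>k\<ge>1. walk \<alpha> \<beta> a1 a2 k = n
      then ereal (real (GREATEST k. k \<ge> 1 \<and> walk \<alpha> \<beta> a1 a2 k = n))
      else -\<infinity>)"

text \<open>s^{alpha,beta}(n) = max over a1,a2 >= 1 (rendered as Sup; the max is attained).\<close>
definition s_ab :: "nat \<Rightarrow> nat \<Rightarrow> nat \<Rightarrow> ereal" where
  "s_ab \<alpha> \<beta> n = (SUP p \<in> {p. fst p \<ge> 1 \<and> snd p \<ge> 1}. s_walk \<alpha> \<beta> n (fst p) (snd p))"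

definition valid :: "(nat \<times> nat) set \<Rightarrow> bool" where
  "valid T \<longleftrightarrow> T \<subseteq> {(\<alpha>, \<beta>). \<alpha> \<ge> 1 \<and> \<beta> \<ge> 1 \<and> coprime \<alpha> \<beta>}"

definition s_bar :: "(nat \<times> nat) set \<Rightarrow> nat \<Rightarrow> ereal" where
  "s_bar T n = (SUP p \<in> T. s_ab (fst p) (snd p) n)"

definition S_set :: "(nat \<times> nat) set \<Rightarrow> nat \<Rightarrow> (nat \<times> nat) set" where
  "S_set T n = {p \<in> T. s_ab (fst p) (snd p) n = s_bar T n}"

end

theory Submission
  imports Defs "HOL-Number_Theory.Cong"
begin

lemma frob:
  fixes a b n :: nat
  assumes "a \<ge> 1" "b \<ge> 1" "coprime a b" "n > a * b"
  shows "\<exists>x y. x \<ge> 1 \<and> y \<ge> 1 \<and> n = a * x + b * y"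
proof -
  obtain u v where uv: "a * u = b * v + 1"
    using bezout_nat[of a b] assms by auto
  define x0 where "x0 = (n * u) mod b"
  define x1 where "x1 = (if x0 = 0 then b else x0)"
  have x1: "x1 \<ge> 1" "x1 \<le> b"
    using assms(2) by (auto simp: x1_def x0_def)
  have c1: "[x1 = n * u] (mod b)"
    by (auto simp: x1_def x0_def cong_def)
  have c2: "[a * (n * u) = n] (mod b)"
  proof -
    have "a * (n * u) = n * (a * u)" by (simp add: ac_simps)
    also have "\<dots> = n * (b * v) + n" using uv by simp
    finally have "a * (n * u) = (n * v) * b + n" by (simp add: ac_simps)
    then show ?thesis by (simp add: cong_def)
  qed
  have c3: "[n = a * x1] (mod b)"
    using cong_scalar_left[OF c1, of a] c2 by (meson cong_sym cong_trans)
  have le: "a * x1 \<le> a * b" using x1 by simp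
  then have "a * x1 \<le> n" using assms(4) by linarith
  then obtain q where q: "n = q * b + a * x1" using c3 cong_le_nat by blast
  have "q \<ge> 1"
  proof (rule ccontr)
    assume "\<not> q \<ge> 1" then have "q = 0" by simp
    then show False using q le assms(4) by simp
  qed
  then show ?thesis using q x1 by (intro exI[of _ x1] exI[of _ q]) (simp add: algebra_simps)
qed

lemma coprime_add_mult_nat: "coprime (m::nat) (k * m + n) \<longleftrightarrow> coprime m n"
  by (simp add: coprime_iff_gcd_eq_1 gcd_add_mult)

lemma walk0_lin:
  "walk0 al be a1 a2 j = a1 * walk0 al be 1 0 j + a2 * walk0 al be 0 1 j"
  by (induction al be a1 a2 j rule: walk0.induct) (simp_all add: algebra_simps)

lemma walk0_shift_aux:
  "walk0 al be 1 0 (Suc j) = be * walk0 al be 0 1 j \<and>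
   walk0 al be 1 0 (Suc (Suc j)) = be * walk0 al be 0 1 (Suc j)"
proof (induction j)
  case 0 then show ?case by simp
next
  case (Suc j)
  have h: "walk0 al be 1 0 (Suc (Suc (Suc j))) = al * walk0 al be 1 0 (Suc (Suc j)) + be * walk0 al be 1 0 (Suc j)"
    by (rule walk0.simps(3))
  have h2: "walk0 al be 0 1 (Suc (Suc j)) = al * walk0 al be 0 1 (Suc j) + be * walk0 al be 0 1 j"
    by (rule walk0.simps(3))
  have i1: "walk0 al be 1 0 (Suc j) = be * walk0 al be 0 1 j" using Suc.IH by blast
  have i2: "walk0 al be 1 0 (Suc (Suc j)) = be * walk0 al be 0 1 (Suc j)" using Suc.IH by blast
  have "walk0 al be 1 0 (Suc (Suc (Suc j))) = al * (be * walk0 al be 0 1 (Suc j)) + be * (be * walk0 al be 0 1 j)"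
    unfolding h i1 i2 by (rule refl)
  also have "\<dots> = be * (al * walk0 al be 0 1 (Suc j) + be * walk0 al be 0 1 j)"
    by (simp add: algebra_simps)
  also have "\<dots> = be * walk0 al be 0 1 (Suc (Suc j))" unfolding h2 by (rule refl)
  finally show ?case using i2 by blast
qed

lemma walk0_shift: "walk0 al be 1 0 (Suc j) = be * walk0 al be 0 1 j"
  using walk0_shift_aux by blast

lemma Q_pos: "al \<ge> 1 \<Longrightarrow> walk0 al be 0 1 (Suc j) \<ge> 1"
proof (induction j)
  case 0 then show ?case by simp
next
  case (Suc j)
  have X: "1 * 1 \<le> al * walk0 al be 0 1 (Suc j)" using Suc by (intro mult_le_mono) auto
  have Y: "walk0 al be 0 1 (Suc (Suc j)) = al * walk0 al be 0 1 (Suc j) + be * walk0 al be 0 1 j"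
    by (rule walk0.simps(3))
  show ?case using X Y by linarith
qed

lemma Q_coprime:
  assumes "coprime al be"
  shows "coprime be (walk0 al be 0 1 (Suc j)) \<and>
         coprime (walk0 al be 0 1 (Suc j)) (walk0 al be 0 1 (Suc (Suc j)))"
proof (induction j)
  case 0 then show ?case by simp
next
  case (Suc j)
  define q0 where "q0 = walk0 al be 0 1 j"
  define q1 where "q1 = walk0 al be 0 1 (Suc j)"
  define q2 where "q2 = walk0 al be 0 1 (Suc (Suc j))"
  have e2: "q2 = al * q1 + be * q0" by (simp add: q0_def q1_def q2_def)
  have e3: "walk0 al be 0 1 (Suc (Suc (Suc j))) = al * q2 + be * q1"
    by (simp add: q1_def q2_def)
  have h1: "coprime be q1" "coprime q1 q2" using Suc by (simp_all add: q1_def q2_def)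
  have "coprime be (al * q1)" using h1 assms by (simp add: coprime_commute)
  then have A: "coprime be q2" unfolding e2
    by (metis add.commute coprime_add_mult_nat mult.commute)
  have "coprime q2 (be * q1)" using A h1 by (simp add: coprime_commute)
  then have B: "coprime q2 (al * q2 + be * q1)"
    by (metis coprime_add_mult_nat mult.commute)
  have "coprime be q2 \<and> coprime q2 (walk0 al be 0 1 (Suc (Suc (Suc j))))"
    unfolding e3 using A B by blast
  then show ?case unfolding q2_def by blast
qed

lemma walk0_upper:
  assumes "a1 \<le> 1" "a2 \<le> 1" "al + be \<ge> 1"
  shows "walk0 al be a1 a2 j \<le> (al + be) ^ j \<and> walk0 al be a1 a2 (Suc j) \<le> (al + be) ^ Suc j"
proof (induction j)
  case 0 then show ?case using assms by simp
next
  case (Suc j)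
  let ?B = "al + be"
  have "walk0 al be a1 a2 (Suc (Suc j)) = al * walk0 al be a1 a2 (Suc j) + be * walk0 al be a1 a2 j" by simp
  also have "\<dots> \<le> al * ?B ^ Suc j + be * ?B ^ j"
    using Suc by (intro add_mono mult_left_mono) auto
  also have "\<dots> \<le> al * ?B ^ Suc j + be * ?B ^ Suc j"
    using assms(3) by (intro add_mono mult_left_mono power_increasing) auto
  also have "\<dots> = ?B ^ Suc (Suc j)" by (simp add: algebra_simps)
  finally show ?case using Suc by simp
qed

lemma walk0_mono:
  assumes "al \<ge> 1"
  shows "walk0 al be a1 a2 (Suc j) \<le> walk0 al be a1 a2 (Suc (Suc j))"
proof -
  have X: "1 * walk0 al be a1 a2 (Suc j) \<le> al * walk0 al be a1 a2 (Suc j)" using assms by (intro mult_le_mono1) auto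
  have Y: "walk0 al be a1 a2 (Suc (Suc j)) = al * walk0 al be a1 a2 (Suc j) + be * walk0 al be a1 a2 j"
    by (rule walk0.simps(3))
  show ?thesis using X Y by linarith
qed

lemma walk0_growth:
  assumes "al \<ge> 1" "be \<ge> 1" "a1 \<ge> 1" "a2 \<ge> 1"
  shows "(al + be) ^ ((j - 1) div 2) \<le> walk0 al be a1 a2 j"
proof (induction j rule: less_induct)
  case (less j)
  show ?case
  proof (cases j)
    case 0 then show ?thesis using assms by simp
  next
    case (Suc i)
    show ?thesis
    proof (cases i)
      case 0 then show ?thesis using Suc assms by simp
    next
      case (Suc i')
      show ?thesis
      proof (cases i')
        case 0
        have X: "1 * 1 \<le> al * a2" using assms by (intro mult_le_mono) auto
        have Y: "walk0 al be a1 a2 j = al * a2 + be * a1" using Suc \<open>j = Suc i\<close> 0 by simp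
        have Z: "(j - 1) div 2 = 0" using Suc \<open>j = Suc i\<close> 0 by simp
        show ?thesis unfolding Y Z power_0 using X by linarith
      next
        case (Suc m)
        have j: "j = Suc (Suc (Suc m))" using Suc \<open>i = Suc i'\<close> \<open>j = Suc i\<close> by simp
        have ih: "(al + be) ^ (m div 2) \<le> walk0 al be a1 a2 (Suc m)"
          using less[of "Suc m"] j by simp
        have mo: "walk0 al be a1 a2 (Suc m) \<le> walk0 al be a1 a2 (Suc (Suc m))"
          using walk0_mono assms by blast
        have "walk0 al be a1 a2 j = al * walk0 al be a1 a2 (Suc (Suc m)) + be * walk0 al be a1 a2 (Suc m)"
          using j by simp
        also have "\<dots> \<ge> al * walk0 al be a1 a2 (Suc m) + be * walk0 al be a1 a2 (Suc m)"
          using mo by simp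
        finally have "walk0 al be a1 a2 j \<ge> (al + be) * walk0 al be a1 a2 (Suc m)"
          by (simp add: algebra_simps)
        moreover have "(al + be) * walk0 al be a1 a2 (Suc m) \<ge> (al + be) * (al + be) ^ (m div 2)"
          using ih by (rule mult_le_mono2)
        moreover have F3: "(j - 1) div 2 = Suc (m div 2)" using j by simp
        ultimately show ?thesis unfolding F3 power_Suc by linarith
      qed
    qed
  qed
qed

lemma walk_bound:
  assumes "al \<ge> 1" "be \<ge> 1" "a1 \<ge> 1" "a2 \<ge> 1" "walk al be a1 a2 k = n"
  shows "(al + be) ^ ((k - 2) div 2) \<le> n"
proof -
  have "(al + be) ^ ((k - 1 - 1) div 2) \<le> walk0 al be a1 a2 (k - 1)"
    using walk0_growth assms by blast
  moreover have "k - 1 - 1 = k - 2" by simp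
  ultimately show ?thesis using assms(5) by (simp add: walk_def)
qed

lemma idx_bound:
  assumes "al \<ge> 1" "be \<ge> 1" "a1 \<ge> 1" "a2 \<ge> 1" "walk al be a1 a2 k = n"
  shows "k \<le> 2 * n + 3"
proof -
  have "(2::nat) ^ ((k - 2) div 2) \<le> (al + be) ^ ((k - 2) div 2)"
    using assms by (intro power_mono) auto
  also have "\<dots> \<le> n" using walk_bound assms by blast
  also have "n < 2 ^ n" by (rule less_exp)
  finally have "(k - 2) div 2 < n" by (simp add: power_less_imp_less_exp)
  then show ?thesis by linarith
qed

lemma s_walk_le:
  assumes "\<forall>k\<ge>1. walk al be a1 a2 k = n \<longrightarrow> k \<le> u"
  shows "s_walk al be n a1 a2 \<le> ereal (real u)"
proof (cases "\<exists>k\<ge>1. walk al be a1 a2 k = n")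
  case True
  then obtain k where k: "k \<ge> 1 \<and> walk al be a1 a2 k = n" by blast
  let ?P = "\<lambda>k. k \<ge> 1 \<and> walk al be a1 a2 k = n"
  have "?P (Greatest ?P)"
    by (rule GreatestI_nat[of ?P k u]) (use k assms in auto)
  then have "Greatest ?P \<le> u" using assms by blast
  then show ?thesis using True by (simp add: s_walk_def)
next
  case False
  then show ?thesis unfolding s_walk_def by auto
qed

lemma s_ab_le:
  assumes "\<And>a1 a2 k. a1 \<ge> 1 \<Longrightarrow> a2 \<ge> 1 \<Longrightarrow> k \<ge> 1 \<Longrightarrow> walk al be a1 a2 k = n \<Longrightarrow> k \<le> u"
  shows "s_ab al be n \<le> ereal (real u)"
  unfolding s_ab_def
proof (rule SUP_least)
  fix p :: "nat \<times> nat" assume "p \<in> {p. fst p \<ge> 1 \<and> snd p \<ge> 1}"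
  then show "s_walk al be n (fst p) (snd p) \<le> ereal (real u)"
    using assms by (intro s_walk_le) auto
qed

lemma s_ab_ge:
  assumes "al \<ge> 1" "be \<ge> 1" "a1 \<ge> 1" "a2 \<ge> 1" "k \<ge> 1" "walk al be a1 a2 k = n"
  shows "ereal (real k) \<le> s_ab al be n"
proof -
  let ?P = "\<lambda>k. k \<ge> 1 \<and> walk al be a1 a2 k = n"
  have "k \<le> Greatest ?P"
    by (rule Greatest_le_nat[of ?P k "2 * n + 3"]) (use assms idx_bound in blast)+
  then have "ereal (real k) \<le> s_walk al be n a1 a2"
    using assms by (auto simp: s_walk_def)
  also have "\<dots> \<le> s_ab al be n"
    unfolding s_ab_def
    by (rule SUP_upper2[of "(a1, a2)"]) (use assms in auto)
  finally show ?thesis .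
qed

theorem theorem5p1:
  fixes T :: "(nat \<times> nat) set"
  assumes "T \<noteq> {}" and "valid T"
  shows "\<exists>R :: (nat \<times> nat) set. \<exists>nT :: nat. finite R \<and> (\<forall>n\<ge>nT. S_set T n \<subseteq> R)"
proof -
  obtain al0 be0 where p0: "(al0, be0) \<in> T" using assms(1) by auto
  have al0: "al0 \<ge> 1" and be0: "be0 \<ge> 1" and cop0: "coprime al0 be0"
    using p0 assms(2) by (auto simp: valid_def)
  define B where "B = al0 + be0"
  define D where "D = B ^ 2"
  define M where "M = D ^ 4"
  have B2: "B \<ge> 2" using al0 be0 by (simp add: B_def)
  have D2: "D \<ge> 2"
  proof -
    have "2 * 1 \<le> B * B" using B2 by (intro mult_le_mono) auto
    then show ?thesis by (simp add: D_def power2_eq_square)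
  qed
  define R where "R = {p :: nat \<times> nat. fst p + snd p < M}"
  have finR: "finite R"
  proof -
    have "R \<subseteq> {..<M} \<times> {..<M}" by (auto simp: R_def)
    then show ?thesis by (rule finite_subset) auto
  qed
  have main: "S_set T n \<subseteq> R" if n: "n \<ge> D ^ 6 + 1" for n
  proof
    fix p assume pS: "p \<in> S_set T n"
    obtain al be where p: "p = (al, be)" by (cases p)
    have pT: "(al, be) \<in> T" and eq: "s_ab al be n = s_bar T n"
      using pS p by (auto simp: S_set_def)
    have al: "al \<ge> 1" and be: "be \<ge> 1" using pT assms(2) by (auto simp: valid_def)
    show "p \<in> R"
    proof (rule ccontr)
      assume "p \<notin> R"
      then have big: "al + be \<ge> M" using p by (simp add: R_def)
      define K where "K = (LEAST j. n \<le> D ^ j)"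
      have ex: "n \<le> D ^ n"
      proof -
        have "n < 2 ^ n" by (rule less_exp)
        also have "\<dots> \<le> D ^ n" using D2 by (intro power_mono) auto
        finally show ?thesis by simp
      qed
      have K1: "n \<le> D ^ K" unfolding K_def by (rule LeastI[of _ n]) (rule ex)
      have K6: "K > 6"
      proof (rule ccontr)
        assume "\<not> K > 6"
        then have "D ^ K \<le> D ^ 6" using D2 by (intro power_increasing) auto
        then show False using K1 n by linarith
      qed
      define k where "k = K - 1"
      have k6: "k \<ge> 6" using K6 by (simp add: k_def)
      have kK: "Suc k = K" using K6 by (simp add: k_def)
      have Dk: "D ^ k < n"
      proof -
        have "\<not> n \<le> D ^ k" unfolding K_def
          by (rule not_less_Least) (use K6 in \<open>simp add: k_def K_def[symmetric]\<close>)
        then show ?thesis by simp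
      qed
      have nDk: "n \<le> D ^ Suc k" using K1 kK by simp
      define i where "i = k - 2"
      have ki: "k = Suc (Suc i)" using k6 by (simp add: i_def)
      define a where "a = walk0 al0 be0 1 0 k"
      define b where "b = walk0 al0 be0 0 1 k"
      have a_eq: "a = be0 * walk0 al0 be0 0 1 (Suc i)"
        unfolding a_def ki by (rule walk0_shift)
      have a1: "a \<ge> 1"
      proof -
        have "1 * 1 \<le> be0 * walk0 al0 be0 0 1 (Suc i)"
          using be0 Q_pos[OF al0] by (intro mult_le_mono) auto
        then show ?thesis using a_eq by simp
      qed
      have b1: "b \<ge> 1" unfolding b_def ki using Q_pos[OF al0] by blast
      have cab: "coprime a b"
      proof -
        have c1: "coprime be0 b" unfolding b_def ki using Q_coprime[OF cop0, of "Suc i"] by blast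
        have c2: "coprime (walk0 al0 be0 0 1 (Suc i)) b" unfolding b_def ki using Q_coprime[OF cop0, of i] by blast
        show ?thesis unfolding a_eq using c1 c2 by simp
      qed
      have aB: "a \<le> B ^ k" unfolding a_def B_def using walk0_upper[of 1 0 al0 be0 k] al0 by simp
      have bB: "b \<le> B ^ k" unfolding b_def B_def using walk0_upper[of 0 1 al0 be0 k] al0 by simp
      have "a * b \<le> B ^ k * B ^ k" using aB bB by (rule mult_le_mono)
      also have "\<dots> = D ^ k" by (simp add: D_def power_mult_distrib[symmetric] power2_eq_square power_mult[symmetric] mult.commute)
      finally have abn: "a * b < n" using Dk by linarith
      obtain x y where xy: "x \<ge> 1" "y \<ge> 1" "n = a * x + b * y"
        using frob[OF a1 b1 cab abn] by blast
      have "walk al0 be0 x y (Suc k) = n"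
        unfolding walk_def using walk0_lin[of al0 be0 x y k] xy(3) a_def b_def
        by (simp add: mult.commute)
      then have low: "ereal (real (Suc k)) \<le> s_ab al0 be0 n"
        by (intro s_ab_ge[OF al0 be0 xy(1) xy(2)]) auto
      have "s_ab al0 be0 n \<le> s_bar T n" unfolding s_bar_def
        by (rule SUP_upper2[OF p0]) simp
      have up: "s_ab al be n \<le> ereal (real k)"
      proof (rule s_ab_le)
        fix a1 a2 s :: nat
        assume h: "a1 \<ge> 1" "a2 \<ge> 1" "s \<ge> 1" "walk al be a1 a2 s = n"
        define t where "t = (s - 2) div 2"
        have "(al + be) ^ t \<le> n" unfolding t_def using walk_bound[OF al be h(1) h(2) h(4)] .
        moreover have "M ^ t \<le> (al + be) ^ t" using big by (rule power_mono) simp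
        moreover have "M ^ t = D ^ (4 * t)" by (simp add: M_def power_mult)
        ultimately have "D ^ (4 * t) \<le> D ^ Suc k" using nDk by linarith
        then have "4 * t \<le> Suc k" using D2 by (intro power_le_imp_le_exp) auto
        moreover have "s - 2 \<le> 2 * t + 1" unfolding t_def by simp
        ultimately show "s \<le> k" using k6 by linarith
      qed
      have "ereal (real k) < ereal (real (Suc k))" by simp
      then have "s_ab al be n < s_ab al0 be0 n"
        using up low by (meson le_less_trans less_le_trans)
      then show False using eq \<open>s_ab al0 be0 n \<le> s_bar T n\<close> by simp
    qed
  qed
  show ?thesis using finR main by blast
qed

end
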